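(* Let $\Gamma$ be a connected finite simplicial graph with at least three vertices. Suppose there is a collection $\mathcal{G}$ of induced subgraphs $\Delta\subset\Gamma$ satisfying both of the following: (1) for each $\Delta\in\mathcal{G}$, $A(\Delta)$ has property $\mathbf{F}(\mathcal{H})$; (2) each two-edge segment of $\Gamma$ is contained in some $\Delta\in\mathcal{G}$. Then $A(\Gamma)$ has property $\mathbf{F}(\mathcal{H})$, where $\mathcal{H}=\{F_2,\mathbb{Z}^2\}$.
   Context: $A(\Gamma)$ is the right-angled Artin group of $\Gamma$: it is generated by the vertices of $\Gamma$, with relations that adjacent vertices commute. For an induced subgraph $\Delta$, $A(\Delta)$ is the subgroup generated by the vertices of $\Delta$. A subgraph is induced if it contains every edge of $\Gamma$ between two of its vertices. A two-edge segment is a subgraph consisting of vertices $u,v,w$ with $u\ne w$, an edge $uv$ and an edge $vw$. All actions on trees are simplicial and without inversions. A group $G$ has property $\mathbf{F}(\mathcal{H})$ if, whenever $G$ acts on a tree, either there is a global fixed point or some subgroup of $G$ isomorphic to $F_2$ or to $\mathbb{Z}^2$ fixes an edge. *)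

theory Defs
  imports "HOL-Algebra.Algebra"
begin

definition simple_graph :: "'v set \<Rightarrow> ('v \<Rightarrow> 'v \<Rightarrow> bool) \<Rightarrow> bool" where
  "simple_graph V E \<longleftrightarrow>
     (\<forall>x y. E x y \<longrightarrow> x \<in> V \<and> y \<in> V \<and> E y x \<and> x \<noteq> y)"

definition graph_connected :: "'v set \<Rightarrow> ('v \<Rightarrow> 'v \<Rightarrow> bool) \<Rightarrow> bool" where
  "graph_connected V E \<longleftrightarrow> (\<forall>x\<in>V. \<forall>y\<in>V. E\<^sup>*\<^sup>* x y)"

definition is_tree :: "'t set \<Rightarrow> ('t \<Rightarrow> 't \<Rightarrow> bool) \<Rightarrow> bool" where
  "is_tree T ET \<longleftrightarrow> T \<noteq> {} \<and> simple_graph T ET \<and> graph_connected T ET \<and>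
     \<not> (\<exists>c. length c \<ge> 3 \<and> distinct c \<and> (\<forall>i. i + 1 < length c \<longrightarrow> ET (c ! i) (c ! (i + 1)))
            \<and> ET (last c) (hd c))"

text \<open>Words over the alphabet of generators and their inverses: (v, True) is v,
  (v, False) is v inverse.\<close>
definition raag_words :: "'v set \<Rightarrow> ('v \<times> bool) list set" where
  "raag_words V = {w. fst ` set w \<subseteq> V}"

inductive raag_equiv :: "'v set \<Rightarrow> ('v \<Rightarrow> 'v \<Rightarrow> bool) \<Rightarrow>
    ('v \<times> bool) list \<Rightarrow> ('v \<times> bool) list \<Rightarrow> bool" for V E where
  refl: "w \<in> raag_words V \<Longrightarrow> raag_equiv V E w w"
| sym: "raag_equiv V E w w' \<Longrightarrow> raag_equiv V E w' w"
| trans: "raag_equiv V E w w' \<Longrightarrow> raag_equiv V E w' w'' \<Longrightarrow> raag_equiv V E w w''"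
| cancel: "xs \<in> raag_words V \<Longrightarrow> ys \<in> raag_words V \<Longrightarrow> v \<in> V \<Longrightarrow>
     raag_equiv V E (xs @ [(v, b), (v, \<not> b)] @ ys) (xs @ ys)"
| comm: "xs \<in> raag_words V \<Longrightarrow> ys \<in> raag_words V \<Longrightarrow> u \<in> V \<Longrightarrow> v \<in> V \<Longrightarrow> E u v \<Longrightarrow>
     raag_equiv V E (xs @ [(u, b), (v, c)] @ ys) (xs @ [(v, c), (u, b)] @ ys)"

definition raag_rel :: "'v set \<Rightarrow> ('v \<Rightarrow> 'v \<Rightarrow> bool) \<Rightarrow> (('v \<times> bool) list \<times> ('v \<times> bool) list) set" where
  "raag_rel V E = {(x, y). raag_equiv V E x y}"

definition raag_mult :: "'v set \<Rightarrow> ('v \<Rightarrow> 'v \<Rightarrow> bool) \<Rightarrow>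
    ('v \<times> bool) list set \<Rightarrow> ('v \<times> bool) list set \<Rightarrow> ('v \<times> bool) list set" where
  "raag_mult V E A B = raag_rel V E `` {(SOME a. a \<in> A) @ (SOME b. b \<in> B)}"

definition raag :: "'v set \<Rightarrow> ('v \<Rightarrow> 'v \<Rightarrow> bool) \<Rightarrow> ('v \<times> bool) list set monoid" where
  "raag V E = \<lparr> carrier = raag_words V // raag_rel V E,
                monoid.mult = raag_mult V E,
                one = raag_rel V E `` {[]} \<rparr>"

definition raag_gen :: "'v set \<Rightarrow> ('v \<Rightarrow> 'v \<Rightarrow> bool) \<Rightarrow> 'v \<Rightarrow> ('v \<times> bool) list set" where
  "raag_gen V E v = raag_rel V E `` {[(v, True)]}"

text \<open>For an induced subgraph with vertex set D, A(D) is the subgroup of A(V,E)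
  generated by the vertices of D.\<close>
definition raag_sub :: "'v set \<Rightarrow> ('v \<Rightarrow> 'v \<Rightarrow> bool) \<Rightarrow> 'v set \<Rightarrow> ('v \<times> bool) list set monoid" where
  "raag_sub V E D = (raag V E)\<lparr>carrier := generate (raag V E) (raag_gen V E ` D)\<rparr>"

definition F2_group :: "(nat \<times> bool) list set monoid" where
  "F2_group = raag {0, 1} (\<lambda>_ _. False)"

definition Z2_group :: "(int \<times> int) monoid" where
  "Z2_group = DirProd integer_group integer_group"

definition tree_action :: "('a, 'm) monoid_scheme \<Rightarrow> 't set \<Rightarrow> ('t \<Rightarrow> 't \<Rightarrow> bool)
    \<Rightarrow> ('a \<Rightarrow> 't \<Rightarrow> 't) \<Rightarrow> bool" where
  "tree_action G T ET \<phi> \<longleftrightarrow> group_action G T \<phi> \<and>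
     (\<forall>g\<in>carrier G. \<forall>x y. ET x y \<longrightarrow> ET (\<phi> g x) (\<phi> g y)) \<and>
     (\<forall>g\<in>carrier G. \<forall>x y. ET x y \<longrightarrow> \<not> (\<phi> g x = y \<and> \<phi> g y = x))"

definition prop_FH :: "('a, 'm) monoid_scheme \<Rightarrow> 't itself \<Rightarrow> bool" where
  "prop_FH G _ \<longleftrightarrow>
     (\<forall>(T :: 't set) ET \<phi>. is_tree T ET \<and> tree_action G T ET \<phi> \<longrightarrow>
        (\<exists>x\<in>T. \<forall>g\<in>carrier G. \<phi> g x = x) \<or>
        (\<exists>H x y. subgroup H G \<and> (G\<lparr>carrier := H\<rparr> \<cong> F2_group \<or> G\<lparr>carrier := H\<rparr> \<cong> Z2_group)
           \<and> ET x y \<and> (\<forall>h\<in>H. \<phi> h x = x \<and> \<phi> h y = y)))"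

end

theory Submission
  imports Defs
begin


lemma raag_equiv_words:
  "raag_equiv V E x y \<Longrightarrow> x \<in> raag_words V \<and> y \<in> raag_words V"
  by (induction rule: raag_equiv.induct) (auto simp: raag_words_def)

lemma raag_words_append[simp]: "xs @ ys \<in> raag_words V \<longleftrightarrow> xs \<in> raag_words V \<and> ys \<in> raag_words V"
  by (auto simp: raag_words_def)

lemma raag_words_Cons[simp]: "x # ys \<in> raag_words V \<longleftrightarrow> fst x \<in> V \<and> ys \<in> raag_words V"
  by (auto simp: raag_words_def)

lemma raag_words_Nil[simp]: "[] \<in> raag_words V"
  by (auto simp: raag_words_def)

lemma raag_equiv_append_right:
  assumes "raag_equiv V E x y" "c \<in> raag_words V"
  shows "raag_equiv V E (x @ c) (y @ c)"
  using assms
proof (induction rule: raag_equiv.induct)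
  case (refl w) then show ?case by (intro raag_equiv.refl) simp
next
  case (sym w w') then show ?case by (blast intro: raag_equiv.sym)
next
  case (trans w w' w'') then show ?case by (blast intro: raag_equiv.trans)
next
  case (cancel xs ys v b)
  then show ?case using raag_equiv.cancel[of xs V "ys @ c" v E b] by simp
next
  case (comm xs ys u v b c')
  then show ?case using raag_equiv.comm[of xs V "ys @ c" u v E b c'] by simp
qed

lemma raag_equiv_append_left:
  assumes "raag_equiv V E x y" "c \<in> raag_words V"
  shows "raag_equiv V E (c @ x) (c @ y)"
  using assms
proof (induction rule: raag_equiv.induct)
  case (refl w) then show ?case by (intro raag_equiv.refl) simp
next
  case (sym w w') then show ?case by (blast intro: raag_equiv.sym)
next
  case (trans w w' w'') then show ?case by (blast intro: raag_equiv.trans)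
next
  case (cancel xs ys v b)
  then show ?case using raag_equiv.cancel[of "c @ xs" V ys v E b] by simp
next
  case (comm xs ys u v b c')
  then show ?case using raag_equiv.comm[of "c @ xs" V ys u v E b c'] by simp
qed

lemma raag_equiv_append:
  assumes "raag_equiv V E x x'" "raag_equiv V E y y'"
  shows "raag_equiv V E (x @ y) (x' @ y')"
proof -
  have "raag_equiv V E (x @ y) (x' @ y)"
    using assms raag_equiv_append_right raag_equiv_words by blast
  moreover have "raag_equiv V E (x' @ y) (x' @ y')"
    using assms raag_equiv_append_left raag_equiv_words by blast
  ultimately show ?thesis by (rule raag_equiv.trans)
qed

lemma raag_equiv_equiv: "equiv (raag_words V) (raag_rel V E)"
  unfolding equiv_def refl_on_def sym_def trans_def raag_rel_def
  using raag_equiv_words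
  by (auto intro: raag_equiv.refl raag_equiv.sym raag_equiv.trans)

abbreviation cls where "cls V E w \<equiv> raag_rel V E `` {w}"

lemma mem_cls: "c \<in> cls V E w \<longleftrightarrow> raag_equiv V E w c"
  by (auto simp: raag_rel_def)

lemma cls_eq: "raag_equiv V E w w' \<Longrightarrow> cls V E w = cls V E w'"
  using raag_equiv_equiv[of V E]
  by (metis equiv_class_eq raag_rel_def case_prodI mem_Collect_eq)

lemma cls_self: "w \<in> raag_words V \<Longrightarrow> w \<in> cls V E w"
  by (simp add: raag_rel_def raag_equiv.refl)

lemma some_cls: "w \<in> raag_words V \<Longrightarrow> raag_equiv V E w (SOME a. a \<in> cls V E w)"
  by (metis cls_self mem_cls someI)

lemma carrier_raag: "A \<in> carrier (raag V E) \<longleftrightarrow> (\<exists>w\<in>raag_words V. A = cls V E w)"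
  by (auto simp: raag_def quotient_def)

lemma raag_mult_cls:
  assumes "a \<in> raag_words V" "b \<in> raag_words V"
  shows "cls V E a \<otimes>\<^bsub>raag V E\<^esub> cls V E b = cls V E (a @ b)"
proof -
  have "raag_equiv V E (a @ b) ((SOME x. x \<in> cls V E a) @ (SOME x. x \<in> cls V E b))"
    by (intro raag_equiv_append some_cls assms)
  then show ?thesis
    by (simp add: raag_def raag_mult_def cls_eq[symmetric])
qed

lemma raag_one: "\<one>\<^bsub>raag V E\<^esub> = cls V E []"
  by (simp add: raag_def)



lemma Z2_group_group: "group Z2_group"
  unfolding Z2_group_def by (intro DirProd_group group_integer_group)

lemma Z2_carrier[simp]: "carrier Z2_group = UNIV"
  by (simp add: Z2_group_def DirProd_def integer_group_def)

lemma Z2_mult[simp]: "x \<otimes>\<^bsub>Z2_group\<^esub> y = (fst x + fst y, snd x + snd y)"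
  by (simp add: Z2_group_def DirProd_def integer_group_def split: prod.splits)

lemma Z2_one[simp]: "\<one>\<^bsub>Z2_group\<^esub> = (0, 0)"
  by (simp add: Z2_group_def DirProd_def integer_group_def)

lemma Z2_inv[simp]: "inv\<^bsub>Z2_group\<^esub> x = (- fst x, - snd x)"
  by (rule group.inv_equality[OF Z2_group_group]) auto

lemma Z2_nat_pow: "x [^]\<^bsub>Z2_group\<^esub> (n::nat) = (int n * fst x, int n * snd x)"
proof (induction n)
  case 0 then show ?case by simp
next
  case (Suc n)
  have "x [^]\<^bsub>Z2_group\<^esub> Suc n = x [^]\<^bsub>Z2_group\<^esub> n \<otimes>\<^bsub>Z2_group\<^esub> x"
    by (simp)
  then show ?case using Suc by (simp add: algebra_simps)
qed

lemma Z2_int_pow: "x [^]\<^bsub>Z2_group\<^esub> (n::int) = (n * fst x, n * snd x)"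
  by (simp add: int_pow_def2 Z2_nat_pow)

lemma (in group) comm_inv:
  assumes "x \<in> carrier G" "y \<in> carrier G" "x \<otimes> y = y \<otimes> x"
  shows "inv x \<otimes> y = y \<otimes> inv x"
proof -
  have "inv x \<otimes> y = inv x \<otimes> (y \<otimes> x) \<otimes> inv x"
    using assms(1,2) by (simp add: m_assoc)
  also have "\<dots> = inv x \<otimes> (x \<otimes> y) \<otimes> inv x" by (simp only: assms(3))
  also have "\<dots> = y \<otimes> inv x" using assms(1,2) by (simp add: m_assoc[symmetric])
  finally show ?thesis .
qed

lemma (in group) comm_int_pow:
  assumes "x \<in> carrier G" "y \<in> carrier G" "x \<otimes> y = y \<otimes> x"
  shows "x [^] (a::int) \<otimes> y = y \<otimes> x [^] a"
proof -
  have n: "x [^] (n::nat) \<otimes> y = y \<otimes> x [^] n" for n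
    by (rule group_commutes_pow[OF assms(3) assms(1,2)])
  show ?thesis
  proof (cases "a < 0")
    case True
    have "inv (x [^] nat (-a)) \<otimes> y = y \<otimes> inv (x [^] nat (-a))"
      proof (rule comm_inv)
      show "x [^] nat (-a) \<in> carrier G" using assms(1) by simp
      show "y \<in> carrier G" by (rule assms(2))
      show "x [^] nat (-a) \<otimes> y = y \<otimes> x [^] nat (-a)" by (rule n)
    qed
    moreover have "x [^] a = inv (x [^] nat (-a))" using True by (simp only: int_pow_def2 if_True)
    ultimately show ?thesis by (simp only:)
  next
    case False
    then have "x [^] a = x [^] nat a" by (simp only: int_pow_def2 if_False)
    then show ?thesis using n[of "nat a"] by (simp only:)
  qed
qed


lemma (in group) comm_int_pow2:
  assumes "x \<in> carrier G" "y \<in> carrier G" "x \<otimes> y = y \<otimes> x"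
  shows "x [^] (a::int) \<otimes> y [^] (b::int) = y [^] b \<otimes> x [^] a"
proof -
  have "y [^] b \<otimes> x [^] a = x [^] a \<otimes> y [^] b"
  proof (rule comm_int_pow)
    show "y \<in> carrier G" by (rule assms(2))
    show "x [^] a \<in> carrier G" using assms(1) by simp
    show "y \<otimes> x [^] a = x [^] a \<otimes> y" by (rule comm_int_pow[OF assms, symmetric])
  qed
  then show ?thesis by (rule HOL.sym)
qed

fun esum :: "'v \<Rightarrow> ('v \<times> bool) list \<Rightarrow> int" where
  "esum u [] = 0"
| "esum u (x # w) = (if fst x = u then (if snd x then 1 else -1) else 0) + esum u w"

lemma esum_append[simp]: "esum u (xs @ ys) = esum u xs + esum u ys"
  by (induction xs) auto

lemma esum_equiv: "raag_equiv V E x y \<Longrightarrow> esum u x = esum u y"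
  by (induction rule: raag_equiv.induct) auto

definition fZ where
  "fZ u v A = (esum u (SOME a. a \<in> A), esum v (SOME a. a \<in> A))"

lemma fZ_cls: "w \<in> raag_words V \<Longrightarrow> fZ u v (cls V E w) = (esum u w, esum v w)"
  unfolding fZ_def using some_cls[of w V E] esum_equiv by metis

lemma fZ_hom: "fZ u v \<in> hom (raag V E) Z2_group"
proof (rule homI)
  fix x assume "x \<in> carrier (raag V E)" show "fZ u v x \<in> carrier Z2_group" by simp
next
  fix x y assume "x \<in> carrier (raag V E)" "y \<in> carrier (raag V E)"
  then obtain a b where ab: "a \<in> raag_words V" "b \<in> raag_words V" "x = cls V E a" "y = cls V E b"
    by (auto simp: carrier_raag)
  then show "fZ u v (x \<otimes>\<^bsub>raag V E\<^esub> y) = fZ u v x \<otimes>\<^bsub>Z2_group\<^esub> fZ u v y"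
    by (simp add: raag_mult_cls fZ_cls)
qed

lemma gen_cls: "raag_gen V E v = cls V E [(v, True)]"
  by (simp add: raag_gen_def)

lemma gen_carrier: "v \<in> V \<Longrightarrow> raag_gen V E v \<in> carrier (raag V E)"
  by (auto simp: carrier_raag gen_cls intro!: bexI[of _ "[(v,True)]"])

lemma gen_comm:
  assumes "u \<in> V" "v \<in> V" "E u v"
  shows "raag_gen V E u \<otimes>\<^bsub>raag V E\<^esub> raag_gen V E v = raag_gen V E v \<otimes>\<^bsub>raag V E\<^esub> raag_gen V E u"
proof -
  have "raag_equiv V E ([] @ [(u, True), (v, True)] @ []) ([] @ [(v, True), (u, True)] @ [])"
    by (rule raag_equiv.comm) (use assms in auto)
  then show ?thesis
    using assms by (simp add: gen_cls raag_mult_cls cls_eq)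
qed


lemma Z2_sub_iso:
  assumes grp: "group (raag V E)" and uv: "u \<in> V" "v \<in> V" "E u v" "u \<noteq> v"
  shows "(raag V E)\<lparr>carrier := generate (raag V E) {raag_gen V E u, raag_gen V E v}\<rparr> \<cong> Z2_group"
proof -
  interpret G: group "raag V E" by (rule grp)
  define gu where "gu = raag_gen V E u"
  define gv where "gv = raag_gen V E v"
  have gu: "gu \<in> carrier (raag V E)" unfolding gu_def by (rule gen_carrier) (rule uv)
  have gv: "gv \<in> carrier (raag V E)" unfolding gv_def by (rule gen_carrier) (rule uv)
  have c: "gu \<otimes>\<^bsub>raag V E\<^esub> gv = gv \<otimes>\<^bsub>raag V E\<^esub> gu"
    unfolding gu_def gv_def by (rule gen_comm) (use uv in auto)
  define H where "H = generate (raag V E) {gu, gv}"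
  define psi where "psi = (\<lambda>(a::int,b::int). gu [^]\<^bsub>raag V E\<^esub> a \<otimes>\<^bsub>raag V E\<^esub> gv [^]\<^bsub>raag V E\<^esub> b)"
  have psi_hom: "psi \<in> hom Z2_group (raag V E)"
  proof (rule homI)
    fix x assume "x \<in> carrier Z2_group" then show "psi x \<in> carrier (raag V E)"
      using gu gv by (auto simp: psi_def split: prod.splits)
  next
    fix x y :: "int \<times> int"
    obtain a b c' d where xy: "x = (a,b)" "y = (c',d)" by (cases x, cases y) auto
    have "psi (x \<otimes>\<^bsub>Z2_group\<^esub> y) = gu [^]\<^bsub>raag V E\<^esub> a \<otimes>\<^bsub>raag V E\<^esub> (gu [^]\<^bsub>raag V E\<^esub> c' \<otimes>\<^bsub>raag V E\<^esub> gv [^]\<^bsub>raag V E\<^esub> b) \<otimes>\<^bsub>raag V E\<^esub> gv [^]\<^bsub>raag V E\<^esub> d"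
      using gu gv by (simp add: psi_def xy G.int_pow_mult G.m_assoc)
    also have "\<dots> = gu [^]\<^bsub>raag V E\<^esub> a \<otimes>\<^bsub>raag V E\<^esub> (gv [^]\<^bsub>raag V E\<^esub> b \<otimes>\<^bsub>raag V E\<^esub> gu [^]\<^bsub>raag V E\<^esub> c') \<otimes>\<^bsub>raag V E\<^esub> gv [^]\<^bsub>raag V E\<^esub> d"
      using G.comm_int_pow2[OF gu gv c] by simp
    also have "\<dots> = psi x \<otimes>\<^bsub>raag V E\<^esub> psi y"
      using gu gv by (simp add: psi_def xy G.m_assoc)
    finally show "psi (x \<otimes>\<^bsub>Z2_group\<^esub> y) = psi x \<otimes>\<^bsub>raag V E\<^esub> psi y" .
  qed
  have fgu: "fZ u v gu = (1, 0)" using uv unfolding gu_def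
    by (simp add: gen_cls fZ_cls)
  have fgv: "fZ u v gv = (0, 1)" using uv unfolding gv_def
    by (simp add: gen_cls fZ_cls)
  have fpsi: "fZ u v (psi z) = z" for z
  proof -
    obtain a b where z: "z = (a,b)" by (cases z)
    have "fZ u v (psi z) = fZ u v (gu [^]\<^bsub>raag V E\<^esub> a) \<otimes>\<^bsub>Z2_group\<^esub> fZ u v (gv [^]\<^bsub>raag V E\<^esub> b)"
      using fZ_hom[of u v V E] gu gv by (simp add: psi_def z hom_mult G.int_pow_closed)
    also have "\<dots> = z"
      using hom_int_pow[OF fZ_hom gu grp Z2_group_group] hom_int_pow[OF fZ_hom gv grp Z2_group_group]
      by (simp add: fgu fgv Z2_int_pow z)
    finally show ?thesis .
  qed
  interpret P: group_hom Z2_group "raag V E" psi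
    by (simp add: group_hom_def group_hom_axioms_def Z2_group_group grp psi_hom)
  have "subgroup (psi ` carrier Z2_group) (raag V E)" by (rule P.img_is_subgroup)
  moreover have "gu = psi (1,0)" "gv = psi (0,1)" using gu gv by (simp_all add: psi_def)
  ultimately have H1: "H \<subseteq> range psi"
    unfolding H_def by (intro G.generate_subgroup_incl) auto
  have Hsub: "subgroup H (raag V E)" unfolding H_def by (rule G.generate_is_subgroup) (use gu gv in auto)
  have "psi z \<in> H" for z
  proof -
    obtain a b where z: "z = (a,b)" by (cases z)
    have "gu \<in> H" "gv \<in> H" unfolding H_def by (auto intro: generate.incl)
    then show ?thesis using Hsub G.subgroup_int_pow_closed
      by (auto simp: psi_def z intro!: subgroup.m_closed[OF Hsub])
  qed
  then have Hr: "H = range psi" using H1 by auto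
  have "fZ u v \<in> iso ((raag V E)\<lparr>carrier := H\<rparr>) Z2_group"
  proof (rule isoI)
    show "fZ u v \<in> hom ((raag V E)\<lparr>carrier := H\<rparr>) Z2_group"
      using fZ_hom[of u v V E] subgroup.subset[OF Hsub] by (auto simp: hom_def)
    show "bij_betw (fZ u v) (carrier ((raag V E)\<lparr>carrier := H\<rparr>)) (carrier Z2_group)"
    proof -
      have "inj_on (fZ u v) (range psi)"
      proof (rule inj_onI)
        fix p q assume pq: "p \<in> range psi" "q \<in> range psi" "fZ u v p = fZ u v q"
        then obtain z1 z2 where "p = psi z1" "q = psi z2" by blast
        with pq(3) show "p = q" using fpsi by simp
      qed
      moreover have "fZ u v ` range psi = UNIV" unfolding image_image fpsi by simp
      ultimately show ?thesis by (simp add: bij_betw_def Hr)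
    qed
  qed
  then show ?thesis unfolding is_iso_def H_def gu_def gv_def by auto
qed



lemma carrier_in_subgroup:
  assumes grp: "group (raag V E)" and K: "subgroup K (raag V E)"
    and gens: "\<forall>v\<in>V. raag_gen V E v \<in> K"
  shows "carrier (raag V E) \<subseteq> K"
proof
  interpret G: group "raag V E" by (rule grp)
  have "cls V E w \<in> K" if "w \<in> raag_words V" for w
    using that
  proof (induction w)
    case Nil then show ?case using subgroup.one_closed[OF K] by (simp add: raag_one)
  next
    case (Cons x w)
    obtain v b where x: "x = (v, b)" by (cases x)
    have v: "v \<in> V" and w: "w \<in> raag_words V" using Cons.prems x by auto
    have g: "raag_gen V E v \<in> K" using gens v by auto
    have gc: "raag_gen V E v \<in> carrier (raag V E)" by (rule gen_carrier[OF v])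
    have "cls V E [(v, b)] \<in> K"
    proof (cases b)
      case True then show ?thesis using g by (simp add: gen_cls)
    next
      case False
      have "cls V E [(v, False)] \<otimes>\<^bsub>raag V E\<^esub> raag_gen V E v = cls V E ([(v,False)] @ [(v,True)])"
        using v by (simp add: gen_cls raag_mult_cls)
      also have "\<dots> = cls V E []"
        using raag_equiv.cancel[of "[]" V "[]" v E False] v by (simp add: cls_eq)
      finally have "inv\<^bsub>raag V E\<^esub> raag_gen V E v = cls V E [(v, False)]"
        using v gc by (intro G.inv_equality) (auto simp: raag_one carrier_raag intro!: bexI[of _ "[(v,False)]"])
      then show ?thesis using subgroup.m_inv_closed[OF K g] False by simp
    qed
    moreover have "cls V E (x # w) = cls V E [(v, b)] \<otimes>\<^bsub>raag V E\<^esub> cls V E w"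
      using v w by (simp add: raag_mult_cls x)
    ultimately show ?case using Cons.IH w subgroup.m_closed[OF K] by simp
  qed
  then show "A \<in> K" if "A \<in> carrier (raag V E)" for A using that by (auto simp: carrier_raag)
qed



definition walk :: "('t \<Rightarrow> 't \<Rightarrow> bool) \<Rightarrow> 't list \<Rightarrow> 't \<Rightarrow> 't \<Rightarrow> bool" where
  "walk ET p x y \<longleftrightarrow> p \<noteq> [] \<and> hd p = x \<and> last p = y \<and> (\<forall>i. Suc i < length p \<longrightarrow> ET (p ! i) (p ! Suc i))"

definition shortest :: "('t \<Rightarrow> 't \<Rightarrow> bool) \<Rightarrow> 't list \<Rightarrow> 't \<Rightarrow> 't \<Rightarrow> bool" where
  "shortest ET p x y \<longleftrightarrow> walk ET p x y \<and> (\<forall>q. walk ET q x y \<longrightarrow> length p \<le> length q)"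

lemma walk_hd: "walk ET p x y \<Longrightarrow> p ! 0 = x"
  by (auto simp: walk_def hd_conv_nth)

lemma walk_last: "walk ET p x y \<Longrightarrow> p ! (length p - 1) = y"
  by (auto simp: walk_def last_conv_nth)

lemma walk_append:
  assumes "walk ET q a b" "walk ET r b c"
  shows "walk ET (q @ tl r) a c"
proof -
  have q: "q \<noteq> []" "hd q = a" "last q = b" "\<And>i. Suc i < length q \<Longrightarrow> ET (q ! i) (q ! Suc i)"
    and r: "r \<noteq> []" "hd r = b" "last r = c" "\<And>i. Suc i < length r \<Longrightarrow> ET (r ! i) (r ! Suc i)"
    using assms by (auto simp: walk_def)
  obtain r0 r' where rr: "r = r0 # r'" using r(1) by (cases r) auto
  have r0: "r0 = b" using r(2) rr by simp
  show ?thesis unfolding walk_def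
  proof (intro conjI allI impI)
    show "q @ tl r \<noteq> []" using q by simp
    show "hd (q @ tl r) = a" using q by simp
    show "last (q @ tl r) = c"
      using q r rr r0 by (cases r') auto
    fix i assume i: "Suc i < length (q @ tl r)"
    show "ET ((q @ tl r) ! i) ((q @ tl r) ! Suc i)"
    proof (cases "Suc i < length q")
      case True then show ?thesis using q(4)[OF True] by (simp add: nth_append)
    next
      case False
      then obtain j where j: "Suc i = length q + j" using le_Suc_ex by (metis not_less)
      have lq: "length q \<ge> 1" using q(1) by (cases q) auto
      have "Suc j < length r" using i j lq rr by auto
      then have e: "ET (r ! j) (r ! Suc j)" by (rule r(4))
      have a1: "(q @ tl r) ! Suc i = r ! Suc j"
        using j lq rr by (simp add: nth_append)
      have a2: "(q @ tl r) ! i = r ! j"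
      proof (cases j)
        case 0
        then have "i = length q - 1" using j by simp
        then have il: "i < length q" "i = length q - 1" using lq by arith+
        then have "(q @ tl r) ! i = q ! (length q - 1)" by (simp add: nth_append)
        also have "\<dots> = b" using q(1,3) by (simp add: last_conv_nth)
        finally show ?thesis using 0 rr r0 by simp
      next
        case (Suc j')
        then have "i = length q + j'" using j by simp
        then show ?thesis using Suc rr by (simp add: nth_append)
      qed
      show ?thesis using e a1 a2 by simp
    qed
  qed
qed

lemma walk_exists: "ET\<^sup>*\<^sup>* x y \<Longrightarrow> \<exists>p. walk ET p x y"
proof (induction rule: rtranclp_induct)
  case base then show ?case by (rule exI[of _ "[x]"]) (simp add: walk_def)
next
  case (step y z)
  then obtain p where p: "walk ET p x y" by blast
  have "walk ET [y, z] y z" using step(2) by (simp add: walk_def)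
  from walk_append[OF p this] show ?case by blast
qed

lemma walk_take:
  assumes "walk ET p x y" "i < length p"
  shows "walk ET (take (Suc i) p) x (p ! i)"
proof -
  have "length p \<le> Suc i \<Longrightarrow> i = length p - 1" using assms(2) by arith
  then show ?thesis using assms unfolding walk_def
    by (auto simp: hd_conv_nth last_conv_nth min_def)
qed

lemma walk_drop:
  assumes "walk ET p x y" "i < length p"
  shows "walk ET (drop i p) (p ! i) y"
  using assms unfolding walk_def
  by (auto simp: hd_drop_conv_nth)

lemma shortest_exists:
  assumes "walk ET p x y" shows "\<exists>q. shortest ET q x y"
proof -
  have "\<exists>n. \<exists>q. walk ET q x y \<and> length q = n" using assms by blast
  then have "\<exists>n. (\<exists>q. walk ET q x y \<and> length q = n) \<and> (\<forall>m<n. \<not> (\<exists>q. walk ET q x y \<and> length q = m))"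
    by (rule exists_least_iff[THEN iffD1])
  then obtain n where n: "\<exists>q. walk ET q x y \<and> length q = n"
    and min: "\<And>m. m < n \<Longrightarrow> \<not> (\<exists>q. walk ET q x y \<and> length q = m)"
    by blast
  then obtain q where "walk ET q x y" "length q = n" by blast
  then have "shortest ET q x y" unfolding shortest_def using min by (auto simp: not_less[symmetric])
  then show ?thesis by blast
qed

lemma shortest_take:
  assumes "shortest ET p x y" "i < length p"
  shows "shortest ET (take (Suc i) p) x (p ! i)"
proof -
  have w: "walk ET p x y" and m: "\<And>q. walk ET q x y \<Longrightarrow> length p \<le> length q"
    using assms by (auto simp: shortest_def)
  have "length (take (Suc i) p) \<le> length q" if q: "walk ET q x (p ! i)" for q
  proof -
    have "walk ET (q @ tl (drop i p)) x y" by (rule walk_append[OF q walk_drop[OF w assms(2)]])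
    then have "length p \<le> length (q @ tl (drop i p))" by (rule m)
    then show ?thesis using assms(2) by simp
  qed
  then show ?thesis using walk_take[OF w assms(2)] by (simp add: shortest_def)
qed

lemma shortest_index:
  assumes "shortest ET p x y" "shortest ET q x y'" "a < length p" "b < length q" "p ! a = q ! b"
  shows "a = b"
proof -
  have 1: "shortest ET (take (Suc a) p) x (p ! a)" by (rule shortest_take[OF assms(1,3)])
  have 2: "shortest ET (take (Suc b) q) x (p ! a)" using shortest_take[OF assms(2,4)] assms(5) by simp
  have "length (take (Suc a) p) \<le> length (take (Suc b) q)"
    using 1 2 by (auto simp: shortest_def)
  moreover have "length (take (Suc b) q) \<le> length (take (Suc a) p)"
    using 1 2 by (auto simp: shortest_def)
  ultimately show ?thesis using assms(3,4) by simp
qed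



lemma shortest_len: "shortest ET p x y \<Longrightarrow> shortest ET q x y \<Longrightarrow> length p = length q"
  by (auto simp: shortest_def intro: antisym)

lemma shortest_unique:
  assumes tree: "is_tree T ET" and p: "shortest ET p x y" and q: "shortest ET q x y"
  shows "p = q"
proof (rule ccontr)
  assume ne: "p \<noteq> q"
  define L where "L = length p"
  have Lq: "length q = L" using shortest_len[OF p q] by (simp add: L_def)
  have wp: "walk ET p x y" and wq: "walk ET q x y" using p q by (auto simp: shortest_def)
  have L1: "L \<ge> 1" using wp by (cases p) (auto simp: walk_def L_def)
  have ep: "\<And>i. Suc i < L \<Longrightarrow> ET (p ! i) (p ! Suc i)" using wp by (auto simp: walk_def L_def)
  have eq: "\<And>i. Suc i < L \<Longrightarrow> ET (q ! i) (q ! Suc i)" using wq Lq by (auto simp: walk_def)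
  have symE: "\<And>a b. ET a b \<Longrightarrow> ET b a" using tree by (auto simp: is_tree_def simple_graph_def)
  have ip: "\<And>a b. a < L \<Longrightarrow> b < L \<Longrightarrow> p ! a = p ! b \<Longrightarrow> a = b"
    using shortest_index[OF p p] by (auto simp: L_def)
  have iq: "\<And>a b. a < L \<Longrightarrow> b < L \<Longrightarrow> q ! a = q ! b \<Longrightarrow> a = b"
    using shortest_index[OF q q] Lq by auto
  have ipq: "\<And>a b. a < L \<Longrightarrow> b < L \<Longrightarrow> p ! a = q ! b \<Longrightarrow> a = b"
    using shortest_index[OF p q] Lq by (auto simp: L_def)
  have "\<exists>j. j < L \<and> p ! j \<noteq> q ! j"
    using ne Lq nth_equalityI[of p q] by (auto simp: L_def)
  then have "\<exists>i. (i < L \<and> p ! i \<noteq> q ! i) \<and> (\<forall>m<i. \<not> (m < L \<and> p ! m \<noteq> q ! m))"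
    by (rule exists_least_iff[THEN iffD1])
  then obtain i where i: "i < L" "p ! i \<noteq> q ! i" and imin: "\<And>m. m < i \<Longrightarrow> p ! m = q ! m"
    by (metis less_trans)
  have "i \<noteq> 0"
  proof
    assume "i = 0" then show False using i walk_hd[OF wp] walk_hd[OF wq] by simp
  qed
  then obtain t where t: "i = Suc t" by (cases i) auto
  have "i \<noteq> L - 1" using i walk_last[OF wp] walk_last[OF wq] Lq by (auto simp: L_def)
  then have iL: "Suc i < L" using i(1) by arith
  have "\<exists>k. (i < k \<and> k < L \<and> p ! k = q ! k)"
    using iL walk_last[OF wp] walk_last[OF wq] Lq by (intro exI[of _ "L - 1"]) (auto simp: L_def)
  then have "\<exists>k. (i < k \<and> k < L \<and> p ! k = q ! k) \<and> (\<forall>m<k. \<not> (i < m \<and> m < L \<and> p ! m = q ! m))"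
    by (rule exists_least_iff[THEN iffD1])
  then obtain k where k: "i < k" "k < L" "p ! k = q ! k"
    and kmin: "\<And>m. i < m \<Longrightarrow> m < k \<Longrightarrow> p ! m \<noteq> q ! m"
    by (metis less_trans)
  have diff: "\<And>m. i \<le> m \<Longrightarrow> m < k \<Longrightarrow> p ! m \<noteq> q ! m"
    using kmin i(2) by (metis le_neq_implies_less)
  define m where "m = k - t"
  have m2: "m \<ge> 2" and km: "k = t + m" using k t by (auto simp: m_def)
  define f where "f = (\<lambda>j. if j \<le> m then p ! (t + j) else q ! (t + 2 * m - j))"
  define c where "c = map f [0..<2 * m]"
  have lc: "length c = 2 * m" by (simp add: c_def)
  have cn: "\<And>j. j < 2 * m \<Longrightarrow> c ! j = f j" by (simp add: c_def)
  have "distinct c"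
  proof -
    have "inj_on f {0..<2 * m}"
    proof (rule inj_onI)
      fix j1 j2 assume j1: "j1 \<in> {0..<2 * m}" and j2: "j2 \<in> {0..<2 * m}" and fe: "f j1 = f j2"
      consider "j1 \<le> m" "j2 \<le> m" | "j1 > m" "j2 > m" | "j1 \<le> m" "j2 > m" | "j1 > m" "j2 \<le> m"
        by arith
      then show "j1 = j2"
      proof cases
        case 1
        then have "p ! (t + j1) = p ! (t + j2)" using fe by (simp add: f_def)
        then have "t + j1 = t + j2" using 1 km k(2) by (intro ip) auto
        then show ?thesis by simp
      next
        case 2
        then have "q ! (t + 2 * m - j1) = q ! (t + 2 * m - j2)" using fe by (simp add: f_def)
        then have "t + 2 * m - j1 = t + 2 * m - j2" using 2 j1 j2 km k(2) by (intro iq) auto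
        then show ?thesis using j1 j2 by auto
      next
        case 3
        then have e: "p ! (t + j1) = q ! (t + 2 * m - j2)" using fe by (simp add: f_def)
        then have r: "t + j1 = t + 2 * m - j2" using 3 j1 j2 km k(2) by (intro ipq) auto
        have "i \<le> t + j1" "t + j1 < k" using 3 j1 j2 km t r by auto
        then have "p ! (t + j1) \<noteq> q ! (t + j1)" by (rule diff)
        then show ?thesis using e r by simp
      next
        case 4
        then have e: "p ! (t + j2) = q ! (t + 2 * m - j1)" using fe by (simp add: f_def)
        then have r: "t + j2 = t + 2 * m - j1" using 4 j1 j2 km k(2) by (intro ipq) auto
        have "i \<le> t + j2" "t + j2 < k" using 4 j1 j2 km t r by auto
        then have "p ! (t + j2) \<noteq> q ! (t + j2)" by (rule diff)
        then show ?thesis using e r by simp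
      qed
    qed
    then show ?thesis by (simp add: c_def distinct_map)
  qed
  moreover have "\<forall>j. j + 1 < length c \<longrightarrow> ET (c ! j) (c ! (j + 1))"
  proof (intro allI impI)
    fix j assume j: "j + 1 < length c"
    consider "Suc j \<le> m" | "j = m" | "j > m" by arith
    then show "ET (c ! j) (c ! (j + 1))"
    proof cases
      case 1
      then have "ET (p ! (t + j)) (p ! Suc (t + j))" using km k(2) by (intro ep) auto
      then show ?thesis using 1 j lc cn by (simp add: f_def)
    next
      case 2
      have e1: "ET (q ! (k - 1)) (q ! Suc (k - 1))" using k(1,2) by (intro eq) auto
      have sk: "Suc (k - 1) = k" using k(1) by arith
      have "ET (q ! (k - 1)) (q ! k)" using e1 unfolding sk .
      then have "ET (q ! k) (q ! (k - 1))" by (rule symE)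
      moreover have "c ! j = q ! k" using 2 j lc cn k(3) km by (simp add: f_def)
      moreover have "c ! (j + 1) = q ! (k - 1)" using 2 j lc cn km
        by (simp add: f_def) (metis add_diff_cancel_left' diff_diff_left mult_2 add.commute)
      ultimately show ?thesis by simp
    next
      case 3
      define r where "r = t + 2 * m - Suc j"
      have r: "Suc r = t + 2 * m - j" "Suc r < L" using 3 j lc km k(2) by (auto simp: r_def)
      have "ET (q ! r) (q ! Suc r)" using r by (intro eq) auto
      then have "ET (q ! Suc r) (q ! r)" by (rule symE)
      moreover have "c ! j = q ! Suc r" using 3 j lc cn r by (simp add: f_def)
      moreover have "c ! (j + 1) = q ! r" using 3 j lc cn by (simp add: f_def r_def)
      ultimately show ?thesis by simp
    qed
  qed
  moreover have "ET (last c) (hd c)"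
  proof -
    have cne: "c \<noteq> []" using lc m2 by auto
    have a: "2 * m - 1 < 2 * m" "\<not> (2 * m - 1 \<le> m)" "t + 2 * m - (2 * m - 1) = Suc t" using m2 by arith+
    have "last c = c ! (2 * m - 1)" using cne lc by (simp add: last_conv_nth)
    also have "\<dots> = q ! Suc t" using cn[OF a(1)] a(2,3) by (simp add: f_def)
    finally have l: "last c = q ! Suc t" .
    have h: "hd c = q ! t" using lc cn m2 imin[of t] t by (simp add: hd_conv_nth f_def c_def)
    have "ET (q ! t) (q ! Suc t)" using iL t by (intro eq) auto
    then have "ET (q ! Suc t) (q ! t)" by (rule symE)
    then show ?thesis unfolding l h .
  qed
  moreover have "length c \<ge> 3" using lc m2 by simp
  ultimately show False using tree unfolding is_tree_def by blast
qed


lemma tree_fix_edge: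
  assumes tree: "is_tree T ET" and xy: "x \<in> T" "y \<in> T" "x \<noteq> y"
  shows "\<exists>z. ET x z \<and> (\<forall>f. (\<forall>a b. ET a b \<longrightarrow> ET (f a) (f b)) \<and> f x = x \<and> f y = y \<longrightarrow> f z = z)"
proof -
  have "graph_connected T ET" using tree[unfolded is_tree_def] by (elim conjE)
  then have "ET\<^sup>*\<^sup>* x y" using xy unfolding graph_connected_def by blast
  from walk_exists[OF this] obtain p0 where "walk ET p0 x y" by blast
  from shortest_exists[OF this] obtain p where p: "shortest ET p x y" by blast
  then have wp: "walk ET p x y" by (simp add: shortest_def)
  have l2: "Suc 1 \<le> length p"
  proof (rule ccontr)
    assume "\<not> Suc 1 \<le> length p"
    moreover have "length p \<noteq> 0" using wp by (simp add: walk_def)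
    ultimately have "length p = 1" by arith
    then show False using walk_hd[OF wp] walk_last[OF wp] xy(3) by simp
  qed
  have e: "ET x (p ! 1)" using wp l2 walk_hd[OF wp] by (auto simp: walk_def)
  have "f (p ! 1) = p ! 1" if f: "\<forall>a b. ET a b \<longrightarrow> ET (f a) (f b)" "f x = x" "f y = y" for f
  proof -
    have "walk ET (map f p) x y"
      using wp f by (auto simp: walk_def hd_map last_map)
    then have "shortest ET (map f p) x y" using p by (auto simp: shortest_def)
    then have "map f p = p" using shortest_unique[OF tree] p by blast
    then have "map f p ! 1 = p ! 1" by simp
    then show ?thesis using l2 by simp
  qed
  then show ?thesis using e by blast
qed



lemma restrict_action:
  assumes "tree_action G T ET \<phi>"
  shows "tree_action (subgroup_generated G S) T ET \<phi>"
proof -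
  have ga: "group_hom G (BijGroup T) \<phi>" using assms by (simp add: tree_action_def group_action_def)
  then have grp: "group G" by (rule group_hom.axioms(1))
  have h: "\<phi> \<in> hom (subgroup_generated G S) (BijGroup T)"
    by (rule group.hom_from_subgroup_generated[OF grp group_hom.homh[OF ga]])
  have "group_action (subgroup_generated G S) T \<phi>"
    unfolding group_action_def group_hom_def group_hom_axioms_def
    using group.group_subgroup_generated[OF grp] group_BijGroup h by blast
  moreover have "carrier (subgroup_generated G S) \<subseteq> carrier G"
    by (rule group.carrier_subgroup_generated_subset[OF grp])
  ultimately show ?thesis using assms unfolding tree_action_def by blast
qed

lemma segment_exists:
  assumes sg: "simple_graph V E" and conn: "graph_connected V E" and fin: "finite V" and c3: "card V \<ge> 3"
  shows "\<exists>u v w. u \<noteq> w \<and> E u v \<and> E v w"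
proof -
  have "\<exists>a b. a \<in> V \<and> b \<in> V \<and> a \<noteq> b"
  proof -
    obtain a where a: "a \<in> V" using c3 by (metis card.empty ex_in_conv not_numeral_le_zero)
    have "card (V - {a}) \<ge> 2" using c3 a fin by (simp add: card_Diff_singleton)
    then obtain b where "b \<in> V - {a}" by (metis card.empty ex_in_conv not_numeral_le_zero)
    then show ?thesis using a by blast
  qed
  then obtain a b where ab: "a \<in> V" "b \<in> V" "a \<noteq> b" by blast
  have "E\<^sup>*\<^sup>* a b" using conn ab by (simp add: graph_connected_def)
  then obtain y where y: "E a y" using ab(3) by (cases rule: converse_rtranclpE) auto
  have ay: "a \<in> V" "y \<in> V" "a \<noteq> y" "E y a" using sg y by (auto simp: simple_graph_def)
  have "card (V - {a, y}) \<ge> 1" using c3 ay fin by (simp add: card_Diff_subset)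
  then obtain z where z: "z \<in> V" "z \<notin> {a, y}" by (metis card.empty ex_in_conv not_one_le_zero Diff_iff)
  have "E\<^sup>*\<^sup>* a z" using conn ay z by (simp add: graph_connected_def)
  have claim: "z' \<in> {a, y} \<or> (\<exists>w. (w \<noteq> y \<and> E a w) \<or> (w \<noteq> a \<and> E y w))" if "E\<^sup>*\<^sup>* a z'" for z'
    using that
  proof (induction rule: rtranclp_induct)
    case base then show ?case by simp
  next
    case (step z1 z2)
    show ?case
    proof (cases "z1 \<in> {a, y}")
      case True
      then show ?thesis using step(2) by (cases "z2 \<in> {a, y}") auto
    next
      case False then show ?thesis using step(3) by blast
    qed
  qed
  from claim[OF \<open>E\<^sup>*\<^sup>* a z\<close>] z obtain w where "(w \<noteq> y \<and> E a w) \<or> (w \<noteq> a \<and> E y w)" by blast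
  then show ?thesis
  proof
    assume "w \<noteq> y \<and> E a w"
    then have "w \<noteq> y" "E w a" "E a y" using sg y by (auto simp: simple_graph_def)
    then show ?thesis by blast
  next
    assume "w \<noteq> a \<and> E y w"
    then have "a \<noteq> w" "E a y" "E y w" using y by auto
    then show ?thesis by blast
  qed
qed


theorem proposition2p7:
  fixes V :: "'v set" and E :: "'v \<Rightarrow> 'v \<Rightarrow> bool" and \<G> :: "'v set set"
  assumes "finite V" and "card V \<ge> 3"
    and "simple_graph V E" and "graph_connected V E"
    and "\<forall>D\<in>\<G>. D \<subseteq> V"
    and "\<forall>D\<in>\<G>. prop_FH (raag_sub V E D) TYPE('t)"
    and "\<forall>u v w. u \<noteq> w \<and> E u v \<and> E v w \<longrightarrow> (\<exists>D\<in>\<G>. {u, v, w} \<subseteq> D)"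
  shows "prop_FH (raag V E) TYPE('t)"
  unfolding prop_FH_def
proof (intro allI impI)
  note fin = assms(1) and c3 = assms(2) and sg = assms(3) and conn = assms(4)
    and GV = assms(5) and FH = assms(6) and seg = assms(7)
  have Ev: "\<And>a b. E a b \<Longrightarrow> a \<in> V \<and> b \<in> V \<and> E b a \<and> a \<noteq> b"
    using sg unfolding simple_graph_def by blast
  fix T :: "'t set" and ET \<phi>
  assume "is_tree T ET \<and> tree_action (raag V E) T ET \<phi>"
  then have tree: "is_tree T ET" and ta: "tree_action (raag V E) T ET \<phi>" by auto
  have gact: "group_action (raag V E) T \<phi>" using ta by (simp add: tree_action_def)
  interpret A: group_action "raag V E" T \<phi> by (rule gact)
  have grp: "group (raag V E)" by (rule group_hom.axioms(1)[OF A.group_hom])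
  interpret G: group "raag V E" by (rule grp)
  have epres: "\<And>g a b. g \<in> carrier (raag V E) \<Longrightarrow> ET a b \<Longrightarrow> ET (\<phi> g a) (\<phi> g b)"
    using ta unfolding tree_action_def by blast
  have ETsym: "\<And>a b. ET a b \<Longrightarrow> a \<in> T \<and> b \<in> T"
    using tree unfolding is_tree_def simple_graph_def by (elim conjE) blast
  let ?Z = "\<exists>H x y. subgroup H (raag V E) \<and> ((raag V E)\<lparr>carrier := H\<rparr> \<cong> F2_group \<or> (raag V E)\<lparr>carrier := H\<rparr> \<cong> Z2_group)
           \<and> ET x y \<and> (\<forall>h\<in>H. \<phi> h x = x \<and> \<phi> h y = y)"
  show "(\<exists>x\<in>T. \<forall>g\<in>carrier (raag V E). \<phi> g x = x) \<or> ?Z"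
  proof (rule disjCI)
    assume nZ: "\<not> ?Z"
    define fx where "fx v q \<longleftrightarrow> \<phi> (raag_gen V E v) q = q" for v q
    have segfix: "\<exists>q\<in>T. fx u q \<and> fx v q \<and> fx w q" if uvw: "u \<noteq> w" "E u v" "E v w" for u v w
    proof -
      obtain D where D: "D \<in> \<G>" "{u, v, w} \<subseteq> D" using seg uvw by blast
      have DV: "D \<subseteq> V" using GV D by blast
      define S where "S = raag_gen V E ` D"
      have SC: "S \<subseteq> carrier (raag V E)" unfolding S_def
      proof (rule image_subsetI)
        fix a assume "a \<in> D" then have "a \<in> V" using DV by blast
        then show "raag_gen V E a \<in> carrier (raag V E)" by (rule gen_carrier)
      qed
      have sub: "raag_sub V E D = subgroup_generated (raag V E) S"
        using SC by (simp add: raag_sub_def subgroup_generated_def S_def Int_absorb1)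
      have P: "prop_FH (subgroup_generated (raag V E) S) TYPE('t)" using FH D(1) sub by metis
      have TA: "is_tree T ET \<and> tree_action (subgroup_generated (raag V E) S) T ET \<phi>"
        using tree restrict_action[OF ta] by blast
      have alt: "(\<exists>x\<in>T. \<forall>g\<in>carrier (subgroup_generated (raag V E) S). \<phi> g x = x) \<or>
        (\<exists>H x y. subgroup H (subgroup_generated (raag V E) S) \<and>
           ((subgroup_generated (raag V E) S)\<lparr>carrier := H\<rparr> \<cong> F2_group \<or> (subgroup_generated (raag V E) S)\<lparr>carrier := H\<rparr> \<cong> Z2_group)
           \<and> ET x y \<and> (\<forall>h\<in>H. \<phi> h x = x \<and> \<phi> h y = y))"
        using P[unfolded prop_FH_def, THEN spec, THEN spec, THEN spec, THEN mp, OF TA] .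
      show ?thesis
      proof (cases "\<exists>x\<in>T. \<forall>g\<in>carrier (subgroup_generated (raag V E) S). \<phi> g x = x")
        case True
        then obtain q where q: "q \<in> T" "\<forall>g\<in>carrier (subgroup_generated (raag V E) S). \<phi> g q = q" by blast
        have "raag_gen V E a \<in> carrier (subgroup_generated (raag V E) S)" if "a \<in> D" for a
          using that SC unfolding carrier_subgroup_generated S_def
          by (intro generate.incl) auto
        then show ?thesis using q D unfolding fx_def by auto
      next
        case False
        then obtain H x y where H: "subgroup H (subgroup_generated (raag V E) S)"
          "(subgroup_generated (raag V E) S)\<lparr>carrier := H\<rparr> \<cong> F2_group \<or> (subgroup_generated (raag V E) S)\<lparr>carrier := H\<rparr> \<cong> Z2_group"
          "ET x y" "\<forall>h\<in>H. \<phi> h x = x \<and> \<phi> h y = y"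
          using alt by blast
        have "subgroup H (raag V E)" using H(1) G.subgroup_subgroup_generated_iff by blast
        moreover have "(subgroup_generated (raag V E) S)\<lparr>carrier := H\<rparr> = (raag V E)\<lparr>carrier := H\<rparr>"
          by (simp add: subgroup_generated_def)
        ultimately have ?Z using H by metis
        then show ?thesis using nZ by blast
      qed
    qed
    have uniq: "x = y" if h: "E u v" "x \<in> T" "y \<in> T" "fx u x" "fx v x" "fx u y" "fx v y" for u v x y
    proof (rule ccontr)
      assume xy: "x \<noteq> y"
      have uv: "u \<in> V" "v \<in> V" "u \<noteq> v" using Ev[OF h(1)] by auto
      obtain z where z: "ET x z"
        and zf: "\<And>f. (\<forall>a b. ET a b \<longrightarrow> ET (f a) (f b)) \<and> f x = x \<and> f y = y \<Longrightarrow> f z = z"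
        using tree_fix_edge[OF tree h(2,3) xy] by blast
      have zT: "z \<in> T" using ETsym[OF z] by simp
      define H where "H = generate (raag V E) {raag_gen V E u, raag_gen V E v}"
      have gu: "raag_gen V E u \<in> carrier (raag V E)" by (rule gen_carrier) (rule uv(1))
      have gv: "raag_gen V E v \<in> carrier (raag V E)" by (rule gen_carrier) (rule uv(2))
      have Hs: "subgroup H (raag V E)" unfolding H_def by (rule G.generate_is_subgroup) (use gu gv in auto)
      have St: "subgroup (stabilizer (raag V E) \<phi> x \<inter> stabilizer (raag V E) \<phi> z) (raag V E)"
        by (intro G.subgroups_Inter_pair A.stabilizer_subgroup h(2) zT)
      have fz: "\<phi> g z = z" if "g \<in> carrier (raag V E)" "\<phi> g x = x" "\<phi> g y = y" for g
        using zf[of "\<phi> g"] epres[OF that(1)] that(2,3) by blast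
      have "{raag_gen V E u, raag_gen V E v} \<subseteq> stabilizer (raag V E) \<phi> x \<inter> stabilizer (raag V E) \<phi> z"
        using gu gv h(4-7) fz[OF gu] fz[OF gv] unfolding fx_def stabilizer_def by auto
      then have "H \<subseteq> stabilizer (raag V E) \<phi> x \<inter> stabilizer (raag V E) \<phi> z"
        unfolding H_def by (rule G.generate_subgroup_incl[OF _ St])
      then have "\<forall>h\<in>H. \<phi> h x = x \<and> \<phi> h z = z" by (auto simp: stabilizer_def)
      moreover have "(raag V E)\<lparr>carrier := H\<rparr> \<cong> Z2_group"
        unfolding H_def by (rule Z2_sub_iso[OF grp uv(1,2) h(1) uv(3)])
      ultimately have ?Z using Hs z by blast
      then show False using nZ by blast
    qed
    obtain u0 v0 w0 where s0: "u0 \<noteq> w0" "E u0 v0" "E v0 w0"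
      using segment_exists[OF sg conn fin c3] by blast
    obtain p where p: "p \<in> T" "fx u0 p" "fx v0 p" using segfix[OF s0] by blast
    define a where "a = u0"
    define b where "b = v0"
    have ab: "E a b" "fx a p" "fx b p" using s0 p by (auto simp: a_def b_def)
    have claim: "fx v p \<and> (\<forall>x. E v x \<longrightarrow> fx x p)" if "E\<^sup>*\<^sup>* a v" for v
      using that
    proof (induction rule: rtranclp_induct)
      case base
      have "fx x p" if ax: "E a x" for x
      proof (cases "x = b")
        case True then show ?thesis using ab by simp
      next
        case False
        have "E x a" using Ev[OF ax] by simp
        then obtain q where q: "q \<in> T" "fx x q" "fx a q" "fx b q" using segfix[OF False _ ab(1)] by blast
        have "p = q" by (rule uniq[OF ab(1) p(1) q(1) ab(2,3) q(3,4)])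
        then show ?thesis using q by simp
      qed
      then show ?case using ab by blast
    next
      case (step v v')
      have fv': "fx v' p" using step.IH step.hyps(2) by blast
      have "fx x p" if vx: "E v' x" for x
      proof (cases "x = v")
        case True then show ?thesis using step.IH by simp
      next
        case False
        have "v \<noteq> x" using False by simp
        then obtain q where q: "q \<in> T" "fx v q" "fx v' q" "fx x q" using segfix[OF _ step.hyps(2) vx] by blast
        have "p = q" by (rule uniq[OF step.hyps(2) p(1) q(1)]) (use step.IH fv' q in auto)
        then show ?thesis using q by simp
      qed
      then show ?case using fv' by blast
    qed
    have aV: "a \<in> V" using Ev[OF ab(1)] by simp
    have allfix: "\<forall>v\<in>V. raag_gen V E v \<in> stabilizer (raag V E) \<phi> p"
    proof
      fix v assume v: "v \<in> V"
      have "E\<^sup>*\<^sup>* a v" using conn aV v by (simp add: graph_connected_def)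
      then have "fx v p" using claim by blast
      then show "raag_gen V E v \<in> stabilizer (raag V E) \<phi> p"
        using gen_carrier[OF v] unfolding fx_def stabilizer_def by auto
    qed
    have "carrier (raag V E) \<subseteq> stabilizer (raag V E) \<phi> p"
      by (rule carrier_in_subgroup[OF grp A.stabilizer_subgroup[OF p(1)] allfix])
    then show "\<exists>x\<in>T. \<forall>g\<in>carrier (raag V E). \<phi> g x = x"
      using p(1) by (auto simp: stabilizer_def)
  qed
qed


end
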